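(* Let $\lambda>-1/2$, $\lambda\ne0$, $M,N\ge0$ integers, $a_0,\dots,a_M\in\mathbb{R}$, and $f_M(x)=\sum_{m=0}^M a_mC^{(\lambda)}_m(x)$. For $0\le n\le N$ and $y\in[-1,1]$ write $\int_{-1}^{y}f_M(y-1-t)C^{(\lambda)}_n(t)\,\mathrm{d}t=\sum_{k=0}^{M+N+1}R^{(\lambda)}_{k,n}C^{(\lambda)}_k(y)$. Then for all integers $k,n$ with $M+1\le k,n\le N$, $$R^{(\lambda)}_{k,n}=(-1)^{k+n}\frac{k+\lambda}{n+\lambda}R^{(\lambda)}_{n,k}.$$
   Context: Gegenbauer polynomials $C^{(\lambda)}_n$ ($\lambda>-1/2$, $\lambda\ne0$) are defined by $C^{(\lambda)}_{-1}=0$, $C^{(\lambda)}_0=1$, $2(n+\lambda)xC^{(\lambda)}_n(x)=(n+1)C^{(\lambda)}_{n+1}(x)+(n+2\lambda-1)C^{(\lambda)}_{n-1}(x)$. *)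

theory Defs
  imports "HOL-Analysis.Analysis"
begin

text \<open>Gegenbauer polynomials C^(lambda)_n(x), via the three-term recurrence
  2(n+lambda) x C_n = (n+1) C_(n+1) + (n+2lambda-1) C_(n-1), C_(-1) = 0, C_0 = 1.\<close>
fun gegenbauer :: "real \<Rightarrow> nat \<Rightarrow> real \<Rightarrow> real" where
  "gegenbauer lam 0 x = 1"
| "gegenbauer lam (Suc 0) x = 2 * lam * x"
| "gegenbauer lam (Suc (Suc n)) x =
     (2 * (real n + 1 + lam) * x * gegenbauer lam (Suc n) x
      - (real n + 2 * lam) * gegenbauer lam n x) / (real n + 2)"

end

theory Submission
  imports Defs "HOL-Computational_Algebra.Polynomial"
begin

fun gp :: "real \<Rightarrow> nat \<Rightarrow> real poly" where
  "gp lam 0 = 1"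
| "gp lam (Suc 0) = [:0, 2*lam:]"
| "gp lam (Suc (Suc n)) = smult (1 / (real n + 2))
     (smult (2 * (real n + 1 + lam)) (pCons 0 (gp lam (Suc n))) - smult (real n + 2 * lam) (gp lam n))"

lemma poly_gp: "poly (gp lam n) x = gegenbauer lam n x"
  by (induction lam n rule: gp.induct) (simp_all add: field_simps)

lemma degree_gp: "degree (gp lam n) \<le> n"
proof (induction lam n rule: gp.induct)
  case (3 lam n)
  have "degree (pCons 0 (gp lam (Suc n))) \<le> Suc (Suc n)"
    using 3(1) by (metis Suc_le_mono degree_pCons_le le_trans)
  then have a: "degree (smult (2 * (real n + 1 + lam)) (pCons 0 (gp lam (Suc n)))) \<le> Suc (Suc n)"
    by (meson degree_smult_le le_trans)
  have "degree (gp lam n) \<le> Suc (Suc n)" using 3(2) by simp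
  then have b: "degree (smult (real n + 2 * lam) (gp lam n)) \<le> Suc (Suc n)"
    by (meson degree_smult_le le_trans)
  show ?case unfolding gp.simps
    by (meson a b degree_diff_le degree_smult_le le_trans)
qed auto

lemma coeff_gp_ne:
  "lam > -1/2 \<Longrightarrow> lam \<noteq> 0 \<Longrightarrow> coeff (gp lam n) n \<noteq> 0"
proof (induction lam n rule: gp.induct)
  case (3 lam n)
  have "coeff (gp lam n) (Suc (Suc n)) = 0" using degree_gp[of lam n]
    by (simp add: coeff_eq_0)
  moreover have "real n + 1 + lam > 0" using 3 by linarith
  ultimately show ?case using 3 by simp
qed auto


lemma gp_deriv_aux:
  "x * poly (pderiv (gp lam (Suc n))) x - poly (pderiv (gp lam n)) x = (real n + 1) * poly (gp lam (Suc n)) x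
   \<and> (x^2 - 1) * poly (pderiv (gp lam (Suc n))) x
       = (real n + 1) * x * poly (gp lam (Suc n)) x - (real n + 2*lam) * poly (gp lam n) x"
proof (induction n)
  case 0
  then show ?case by (simp add: pderiv_pCons power2_eq_square algebra_simps)
next
  case (Suc n)
  define C0 where "C0 = poly (gp lam n) x"
  define C1 where "C1 = poly (gp lam (Suc n)) x"
  define C2 where "C2 = poly (gp lam (Suc (Suc n))) x"
  define D0 where "D0 = poly (pderiv (gp lam n)) x"
  define D1 where "D1 = poly (pderiv (gp lam (Suc n))) x"
  define D2 where "D2 = poly (pderiv (gp lam (Suc (Suc n)))) x"
  have B: "x * D1 - D0 = (real n + 1) * C1" and Dd: "(x^2 - 1) * D1 = (real n + 1) * x * C1 - (real n + 2*lam) * C0"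
    using Suc unfolding C0_def C1_def D0_def D1_def by auto
  have E1: "(real n + 2) * C2 = 2 * (real n + 1 + lam) * x * C1 - (real n + 2*lam) * C0"
    unfolding C0_def C1_def C2_def by (simp add: field_simps)
  have E2: "(real n + 2) * D2 = 2 * (real n + 1 + lam) * (C1 + x * D1) - (real n + 2*lam) * D0"
    unfolding C0_def C1_def D2_def D0_def D1_def by (simp add: pderiv_smult pderiv_diff pderiv_pCons field_simps)
  have D0e: "D0 = x * D1 - (real n + 1) * C1" using B by simp
  have "(real n + 2) * D2 = 2 * (real n + 1 + lam) * (C1 + x * D1) - (real n + 2*lam) * (x * D1 - (real n + 1) * C1)"
    using E2 D0e by simp
  also have "\<dots> = (real n + 2) * (x * D1 + (real n + 1 + 2 * lam) * C1)"
    by (simp add: algebra_simps)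
  finally have Dc: "D2 = x * D1 + (real n + 1 + 2 * lam) * C1" by simp
  have "x * D2 - D1 = (x^2 - 1) * D1 + (real n + 1 + 2 * lam) * x * C1"
    using Dc by (simp add: algebra_simps power2_eq_square)
  also have "\<dots> = (real n + 1) * x * C1 - (real n + 2*lam) * C0 + (real n + 1 + 2 * lam) * x * C1"
    using Dd by simp
  also have "\<dots> = 2 * (real n + 1 + lam) * x * C1 - (real n + 2*lam) * C0"
    by (simp add: algebra_simps)
  also have "\<dots> = (real (Suc n) + 1) * C2" using E1 by (simp add: add.commute)
  finally have g1: "x * D2 - D1 = (real (Suc n) + 1) * C2" .
  have "(x^2 - 1) * D2 = x * ((x^2 - 1) * D1) + (real n + 1 + 2 * lam) * (x^2 - 1) * C1"
    using Dc by (simp add: algebra_simps)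
  also have "\<dots> = x * ((real n + 1) * x * C1 - (real n + 2*lam) * C0) + (real n + 1 + 2 * lam) * (x^2 - 1) * C1"
    using Dd by simp
  also have "\<dots> = x * (2 * (real n + 1 + lam) * x * C1 - (real n + 2*lam) * C0) - (real n + 1 + 2 * lam) * C1"
    by (simp add: algebra_simps power2_eq_square)
  also have "\<dots> = x * ((real n + 2) * C2) - (real n + 1 + 2 * lam) * C1" using E1 by simp
  finally have g2: "(x^2 - 1) * D2 = (real (Suc n) + 1) * x * C2 - (real (Suc n) + 2*lam) * C1"
    by (simp add: algebra_simps)
  show ?case using g1 g2 unfolding C0_def C1_def C2_def D0_def D1_def D2_def by simp
qed


lemma gp_deriv_a:
  "poly (pderiv (gp lam (Suc (Suc n)))) x - poly (pderiv (gp lam n)) x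
     = 2 * (real n + 1 + lam) * poly (gp lam (Suc n)) x"
proof -
  define C0 where "C0 = poly (gp lam n) x"
  define C1 where "C1 = poly (gp lam (Suc n)) x"
  define D0 where "D0 = poly (pderiv (gp lam n)) x"
  define D1 where "D1 = poly (pderiv (gp lam (Suc n))) x"
  define D2 where "D2 = poly (pderiv (gp lam (Suc (Suc n)))) x"
  have B: "x * D1 - D0 = (real n + 1) * C1"
    using gp_deriv_aux[of x lam n] unfolding C0_def C1_def D0_def D1_def by auto
  have E2: "(real n + 2) * D2 = 2 * (real n + 1 + lam) * (C1 + x * D1) - (real n + 2*lam) * D0"
    unfolding C0_def C1_def D2_def D0_def D1_def by (simp add: pderiv_smult pderiv_diff pderiv_pCons field_simps)
  have D0e: "D0 = x * D1 - (real n + 1) * C1" using B by simp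
  have "(real n + 2) * D2 = 2 * (real n + 1 + lam) * (C1 + x * D1) - (real n + 2*lam) * (x * D1 - (real n + 1) * C1)"
    using E2 D0e by simp
  also have "\<dots> = (real n + 2) * (x * D1 + (real n + 1 + 2 * lam) * C1)"
    by (simp add: algebra_simps)
  finally have Dc: "D2 = x * D1 + (real n + 1 + 2 * lam) * C1" by simp
  show ?thesis using Dc D0e unfolding D2_def[symmetric] D0_def[symmetric] C1_def[symmetric]
    by (simp add: algebra_simps)
qed

definition Jg :: "real \<Rightarrow> nat \<Rightarrow> real poly" where
  "Jg lam n = smult (1 / (2 * (real n + lam))) (gp lam (Suc n) - (if n = 0 then 0 else gp lam (n - 1)))"

lemma pderiv_Jg:
  assumes "lam > -1/2" "lam \<noteq> 0"
  shows "pderiv (Jg lam n) = gp lam n"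
proof (cases n)
  case 0
  then show ?thesis using assms by (simp add: Jg_def pderiv_pCons)
next
  case (Suc m)
  have ne: "real m + 1 + lam \<noteq> 0" using assms by linarith
  have "poly (pderiv (Jg lam n)) x = poly (gp lam n) x" for x
    using gp_deriv_a[of lam m x] ne
    by (simp add: Suc Jg_def pderiv_smult pderiv_diff field_simps del: gp.simps)
  then show ?thesis by (metis poly_eq_poly_eq_iff ext)
qed


fun Ac :: "real \<Rightarrow> nat \<Rightarrow> nat \<Rightarrow> nat \<Rightarrow> real" where
  "Ac lam 0 k n = (if k = n then 1 else 0)"
| "Ac lam (Suc j) k n = (Ac lam j k (Suc n) - (if n = 0 then 0 else Ac lam j k (n - 1))) / (2 * (real n + lam))"

fun JJ :: "real \<Rightarrow> nat \<Rightarrow> nat \<Rightarrow> real poly" where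
  "JJ lam 0 n = gp lam n"
| "JJ lam (Suc j) n = smult (1 / (2 * (real n + lam))) (JJ lam j (Suc n) - (if n = 0 then 0 else JJ lam j (n - 1)))"

lemma smult_sum_right: "smult c (sum f S) = (\<Sum>i\<in>S. smult c (f i))"
  by (induct S rule: infinite_finite_induct) (simp_all add: smult_add_right)

lemma JJ_sum: "n + j \<le> K \<Longrightarrow> JJ lam j n = (\<Sum>k\<le>K. smult (Ac lam j k n) (gp lam k))"
proof (induction j arbitrary: n)
  case 0
  have "(\<Sum>k\<le>K. smult (Ac lam 0 k n) (gp lam k)) = (\<Sum>k\<le>K. if k = n then gp lam k else 0)"
    by (rule sum.cong) auto
  then show ?case using 0 by (simp add: sum.delta)
next
  case (Suc j)
  have h1: "JJ lam j (Suc n) = (\<Sum>k\<le>K. smult (Ac lam j k (Suc n)) (gp lam k))"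
    using Suc by simp
  have h2: "n \<noteq> 0 \<Longrightarrow> JJ lam j (n - 1) = (\<Sum>k\<le>K. smult (Ac lam j k (n - 1)) (gp lam k))"
    using Suc by simp
  show ?case
  proof (cases "n = 0")
    case True
    then show ?thesis using h1
      by (simp add: smult_sum_right del: gp.simps)
  next
    case False
    then show ?thesis using h1 h2
      by (simp add: smult_sum_right sum_subtractf[symmetric] smult_diff_left smult_diff_right diff_divide_distrib del: gp.simps)
  qed
qed

lemma funpow_pderiv_lin:
  fixes p q :: "real poly"
  shows "(pderiv ^^ j) (smult c p - smult d q) = smult c ((pderiv ^^ j) p) - smult d ((pderiv ^^ j) q)"
  by (induction j) (simp_all add: pderiv_smult pderiv_diff)

lemma funpow_pderiv_JJ:
  assumes "lam > -1/2" "lam \<noteq> 0"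
  shows "(pderiv ^^ j) (JJ lam j n) = gp lam n"
proof (induction j arbitrary: n)
  case 0
  then show ?case by simp
next
  case (Suc j)
  have "(pderiv ^^ j) (JJ lam (Suc j) n) = Jg lam n"
  proof (cases "n = 0")
    case True
    then show ?thesis using Suc funpow_pderiv_lin[of j "1 / (2 * (real n + lam))" "JJ lam j (Suc n)" 0 0]
      by (simp add: Jg_def del: gp.simps)
  next
    case False
    then show ?thesis using Suc funpow_pderiv_lin[of j "1 / (2 * (real n + lam))" "JJ lam j (Suc n)" "1 / (2 * (real n + lam))" "JJ lam j (n-1)"]
      by (simp add: Jg_def smult_diff_right del: gp.simps)
  qed
  then show ?case using pderiv_Jg[OF assms] by simp
qed

lemma funpow_pderiv_zero_degree:
  "(pderiv ^^ Suc i) (p :: real poly) = 0 \<Longrightarrow> degree p \<le> i"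
proof (induction i arbitrary: p)
  case 0
  then show ?case by (simp add: pderiv_eq_0_iff)
next
  case (Suc i)
  have "(pderiv ^^ Suc i) (pderiv p) = 0" using Suc.prems by (simp only: funpow_Suc_right o_def)
  then have "degree (pderiv p) \<le> i" using Suc.IH by blast
  then show ?case using degree_pderiv[of p] by simp
qed


lemma den_ne: "lam > -1/2 \<Longrightarrow> lam \<noteq> 0 \<Longrightarrow> real n + lam \<noteq> 0"
  by (cases n) auto

lemma Ac_row:
  assumes "lam > -1/2" "lam \<noteq> 0"
  shows "Ac lam (Suc j) k n = (if k = 0 then 0 else Ac lam j (k - 1) n / (2 * (real (k - 1) + lam)))
           - Ac lam j (Suc k) n / (2 * (real (Suc k) + lam))"
proof (induction j arbitrary: k n)
  case 0
  then show ?case by (cases k; cases n) auto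
next
  case (Suc j)
  have L: "Ac lam (Suc (Suc j)) k n = (Ac lam (Suc j) k (Suc n) - (if n = 0 then 0 else Ac lam (Suc j) k (n - 1))) / (2 * (real n + lam))"
    by (subst Ac.simps(2)) simp
  have dn: "\<And>m. real m + lam \<noteq> 0" using den_ne[OF assms] by blast
  have i1: "Ac lam (Suc j) k (Suc n) = (if k = 0 then 0 else Ac lam j (k - 1) (Suc n) / (2 * (real (k - 1) + lam)))
           - Ac lam j (Suc k) (Suc n) / (2 * (real (Suc k) + lam))" by (rule Suc.IH)
  have i2: "Ac lam (Suc j) k (n - 1) = (if k = 0 then 0 else Ac lam j (k - 1) (n - 1) / (2 * (real (k - 1) + lam)))
           - Ac lam j (Suc k) (n - 1) / (2 * (real (Suc k) + lam))" by (rule Suc.IH)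
  have c1: "Ac lam (Suc j) (k - 1) n = (Ac lam j (k - 1) (Suc n) - (if n = 0 then 0 else Ac lam j (k - 1) (n - 1))) / (2 * (real n + lam))"
    by (rule Ac.simps(2))
  have c2: "Ac lam (Suc j) (Suc k) n = (Ac lam j (Suc k) (Suc n) - (if n = 0 then 0 else Ac lam j (Suc k) (n - 1))) / (2 * (real n + lam))"
    by (rule Ac.simps(2))
  have alg: "\<And>a b c d::real. ((if k = 0 then 0 else a / (2 * (real (k - 1) + lam))) - b / (2 * (real (Suc k) + lam))
      - (if n = 0 then 0 else (if k = 0 then 0 else c / (2 * (real (k - 1) + lam))) - d / (2 * (real (Suc k) + lam))))
      / (2 * (real n + lam))
    = (if k = 0 then 0 else ((a - (if n = 0 then 0 else c)) / (2 * (real n + lam))) / (2 * (real (k - 1) + lam)))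
      - ((b - (if n = 0 then 0 else d)) / (2 * (real n + lam))) / (2 * (real (Suc k) + lam))"
    using dn[of n] dn[of "k - 1"] dn[of "Suc k"]
    by (cases "k = 0"; cases "n = 0") (simp_all add: diff_divide_distrib divide_divide_eq_left ac_simps)
  show ?case
    unfolding L i1 i2 c1 c2 by (rule alg)
qed


lemma Ac_sym:
  assumes "lam > -1/2" "lam \<noteq> 0"
  shows "(-1)^k * Ac lam j k n / (real k + lam) = (-1)^n * Ac lam j n k / (real n + lam)"
proof (induction j arbitrary: k n)
  case 0
  then show ?case by simp
next
  case (Suc j)
  have dn: "\<And>m. real m + lam \<noteq> 0" using den_ne[OF assms] by blast
  have u: "(-1)^n * Ac lam j n (Suc k) / (real n + lam) = - ((-1)^k * (Ac lam j (Suc k) n / (real (Suc k) + lam)))"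
    using Suc.IH[of "Suc k" n] by simp
  have R: "(-1)^n * Ac lam (Suc j) n k / (real n + lam)
     = ((-1)^n * Ac lam j n (Suc k) / (real n + lam) - (if k = 0 then 0 else (-1)^n * Ac lam j n (k - 1) / (real n + lam))) / (2 * (real k + lam))"
    by (simp add: diff_divide_distrib right_diff_distrib divide_divide_eq_left ac_simps)
  show ?case
  proof (cases k)
    case 0
    have "(-1)^k * Ac lam (Suc j) k n / (real k + lam) = (- (Ac lam j (Suc k) n / (real (Suc k) + lam)) / 2) / (real k + lam)"
      using 0 by (subst Ac_row[OF assms]) (simp add: divide_divide_eq_left ac_simps)
    then show ?thesis unfolding R u using 0 by (simp add: divide_divide_eq_left ac_simps)
  next
    case (Suc k')
    define P where "P = Ac lam j (Suc k) n / (real (Suc k) + lam)"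
    define Q where "Q = Ac lam j k' n / (real k' + lam)"
    define sg where "sg = ((-1::real)^k)"
    have v: "(-1)^n * Ac lam j n (k - 1) / (real n + lam) = - (sg * Q)"
      using Suc.IH[of k' n] \<open>k = Suc k'\<close> unfolding Q_def sg_def by simp
    have u': "(-1)^n * Ac lam j n (Suc k) / (real n + lam) = - (sg * P)"
      using u unfolding P_def sg_def .
    have L: "(-1)^k * Ac lam (Suc j) k n / (real k + lam) = sg * (Q / 2 - P / 2) / (real k + lam)"
      unfolding P_def Q_def sg_def
      using Suc by (subst Ac_row[OF assms]) (simp add: divide_divide_eq_left ac_simps)
    have "(-1)^n * Ac lam (Suc j) n k / (real n + lam) = (- (sg * P) - (- (sg * Q))) / (2 * (real k + lam))"
      unfolding R u' v using Suc by simp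
    then show ?thesis unfolding L by (simp add: field_simps)
  qed
qed


lemma pderiv_sum': "pderiv (sum f A) = (\<Sum>x\<in>A. pderiv (f x))"
  by (induct A rule: infinite_finite_induct) (simp_all add: pderiv_add)

lemma ex_antideriv: "\<exists>Q. pderiv Q = (q :: real poly)"
proof -
  define Q where "Q = (\<Sum>i\<le>degree q. monom (coeff q i / real (Suc i)) (Suc i))"
  have "pderiv Q = (\<Sum>i\<le>degree q. monom (coeff q i) i)"
    unfolding Q_def pderiv_sum' pderiv_monom
    by (rule sum.cong) (auto simp: field_simps)
  then show ?thesis using poly_as_sum_of_monoms by metis
qed

lemma ftc_poly:
  fixes Q q :: "real poly"
  assumes "a \<le> b" "pderiv Q = q"
  shows "((\<lambda>t. poly q t) has_integral (poly Q b - poly Q a)) {a..b}"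
proof -
  have "((\<lambda>t. poly Q t) has_vector_derivative poly q x) (at x within {a..b})" for x
    using poly_DERIV[of Q x] assms(2)
    by (simp add: has_real_derivative_iff_has_vector_derivative[symmetric] has_field_derivative_at_within)
  then show ?thesis using fundamental_theorem_of_calculus[OF assms(1)] by blast
qed

lemma funpow_pderiv_smult:
  "(pderiv ^^ j) (smult c (p :: real poly)) = smult c ((pderiv ^^ j) p)"
  by (induction j) (simp_all add: pderiv_smult)

lemma Phi:
  "\<exists>P. (\<forall>y\<ge>-1. ((\<lambda>t. (y - t)^i * poly q t) has_integral poly P y) {-1..y})
       \<and> (pderiv ^^ Suc i) P = smult (fact i) (q :: real poly)"
proof (induction i arbitrary: q)
  case 0
  obtain Q where Q: "pderiv Q = q" using ex_antideriv by blast
  define P where "P = Q - [:poly Q (-1):]"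
  have "\<forall>y\<ge>-1. ((\<lambda>t. (y - t)^0 * poly q t) has_integral poly P y) {-1..y}"
    using ftc_poly[OF _ Q] by (simp add: P_def)
  moreover have "(pderiv ^^ Suc 0) P = smult (fact 0) q"
    using Q by (simp add: P_def pderiv_diff pderiv_pCons)
  ultimately show ?case by blast
next
  case (Suc i)
  obtain Q where Q: "pderiv Q = q" using ex_antideriv by blast
  define Q0 where "Q0 = Q - [:poly Q (-1):]"
  have Q0: "pderiv Q0 = q" using Q by (simp add: Q0_def pderiv_diff pderiv_pCons)
  have Q0m: "poly Q0 (-1) = 0" by (simp add: Q0_def)
  obtain P where P1: "\<forall>y\<ge>-1. ((\<lambda>t. (y - t)^i * poly Q0 t) has_integral poly P y) {-1..y}"
    and P2: "(pderiv ^^ Suc i) P = smult (fact i) Q0"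
    using Suc.IH[of Q0] by blast
  define P' where "P' = smult (real (Suc i)) P"
  have "((\<lambda>t. (y - t)^(Suc i) * poly q t) has_integral poly P' y) {-1..y}" if y: "y \<ge> -1" for y
  proof -
    define G where "G = [:y, -1:] ^ Suc i * Q0"
    define F' where "F' = (\<lambda>t. - (real (Suc i) * (y - t)^i * poly Q0 t) + (y - t)^(Suc i) * poly q t)"
    have d1: "pderiv ([:y, -1:] ^ Suc i) = smult (real (Suc i)) ([:y, -1:] ^ i) * [:-1:]"
      by (simp only: pderiv_power_Suc) (simp add: pderiv_pCons)
    have pG: "poly (pderiv G) = F'"
      unfolding G_def pderiv_mult d1
      by (rule ext) (simp add: F'_def Q0 algebra_simps del: power_Suc)
    have i1: "(F' has_integral (poly G y - poly G (-1))) {-1..y}"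
      using ftc_poly[OF y refl, of G] unfolding pG .
    have F0: "poly G y - poly G (-1) = 0" by (simp add: G_def Q0m)
    have i2: "((\<lambda>t. real (Suc i) * ((y - t)^i * poly Q0 t)) has_integral real (Suc i) * poly P y) {-1..y}"
      using P1 y by (intro has_integral_cmult_real) blast
    have "((\<lambda>t. F' t + real (Suc i) * ((y - t)^i * poly Q0 t)) has_integral (0 + real (Suc i) * poly P y)) {-1..y}"
      using has_integral_add[OF i1[unfolded F0] i2] by simp
    moreover have "(\<lambda>t. F' t + real (Suc i) * ((y - t)^i * poly Q0 t)) = (\<lambda>t. (y - t)^(Suc i) * poly q t)"
      by (rule ext) (simp add: F'_def algebra_simps)
    ultimately show ?thesis by (simp add: P'_def)
  qed
  moreover have "(pderiv ^^ Suc (Suc i)) P' = smult (fact (Suc i)) q"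
  proof -
    have "(pderiv ^^ Suc (Suc i)) P' = pderiv ((pderiv ^^ Suc i) P')" by simp
    also have "\<dots> = smult (fact (Suc i)) q"
      unfolding P'_def funpow_pderiv_smult P2 by (simp add: pderiv_smult Q0 fact_Suc)
    finally show ?thesis .
  qed
  ultimately show ?case by blast
qed


lemma tri:
  assumes lam: "lam > -1/2" "lam \<noteq> 0"
  shows "degree (\<Sum>k\<le>K. smult (d k) (gp lam k)) \<le> M \<Longrightarrow> M < k \<Longrightarrow> k \<le> K \<Longrightarrow> d k = 0"
proof (induction K arbitrary: k)
  case 0
  then show ?case by simp
next
  case (Suc K)
  have c0: "coeff (\<Sum>k\<le>Suc K. smult (d k) (gp lam k)) (Suc K) = 0"
    using Suc.prems by (intro coeff_eq_0) simp
  have "coeff (\<Sum>k\<le>Suc K. smult (d k) (gp lam k)) (Suc K) = (\<Sum>k\<le>Suc K. d k * coeff (gp lam k) (Suc K))"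
    by (simp add: coeff_sum)
  also have "\<dots> = d (Suc K) * coeff (gp lam (Suc K)) (Suc K)"
  proof -
    have "\<forall>k\<in>{..K}. coeff (gp lam k) (Suc K) = 0"
      using degree_gp[of lam] by (auto intro!: coeff_eq_0 simp: le_imp_less_Suc order.strict_trans1)
        (meson le_imp_less_Suc order.strict_trans1)
    then show ?thesis by simp
  qed
  finally have dK: "d (Suc K) = 0" using c0 coeff_gp_ne[OF lam, of "Suc K"] by simp
  then have "(\<Sum>k\<le>Suc K. smult (d k) (gp lam k)) = (\<Sum>k\<le>K. smult (d k) (gp lam k))" by simp
  then show ?case using Suc dK
    by (cases "k \<le> K") (auto simp: le_Suc_eq)
qed

lemma poly_agree:
  fixes p q :: "real poly"
  assumes "\<And>y. y \<in> {-1..1} \<Longrightarrow> poly p y = poly q y"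
  shows "p = q"
proof (rule ccontr)
  assume "p \<noteq> q"
  then have "p - q \<noteq> 0" by simp
  then have "finite {x. poly (p - q) x = 0}" by (rule poly_roots_finite)
  moreover have "{-1..1::real} \<subseteq> {x. poly (p - q) x = 0}" using assms by auto
  ultimately have "finite {-1..1::real}" using finite_subset by blast
  then show False using infinite_Icc[of "-1::real" 1] by simp
qed


lemma Ac_sym2:
  assumes "lam > -1/2" "lam \<noteq> 0"
  shows "Ac lam j k n = (-1) ^ (k + n) * ((real k + lam) / (real n + lam)) * Ac lam j n k"
proof -
  have dk: "real k + lam \<noteq> 0" and dn: "real n + lam \<noteq> 0" using den_ne[OF assms] by auto
  have e: "(-1)^k * Ac lam j k n / (real k + lam) = (-1)^n * Ac lam j n k / (real n + lam)"
    by (rule Ac_sym[OF assms])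
  have sk: "((-1::real)^k) * (-1)^k = 1" by (simp flip: power_add)
  have "Ac lam j k n = (-1)^k * (real k + lam) * ((-1)^k * Ac lam j k n / (real k + lam))"
    using dk sk by (simp add: field_simps)
  also have "\<dots> = (-1)^k * (real k + lam) * ((-1)^n * Ac lam j n k / (real n + lam))" by (simp only: e)
  also have "\<dots> = (-1) ^ (k + n) * ((real k + lam) / (real n + lam)) * Ac lam j n k"
    by (simp add: power_add field_simps)
  finally show ?thesis .
qed

lemma column_formula:
  fixes lam :: real and M N :: nat and a :: "nat \<Rightarrow> real"
    and f :: "real \<Rightarrow> real" and R :: "nat \<Rightarrow> nat \<Rightarrow> real"
  assumes lam_gt: "lam > -1/2" and lam_ne: "lam \<noteq> 0"
    and f_def: "\<And>x. f x = (\<Sum>m\<le>M. a m * gegenbauer lam m x)"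
    and R_def: "\<And>n y. n \<le> N \<Longrightarrow> y \<in> {-1..1} \<Longrightarrow>
        integral {-1..y} (\<lambda>t. f (y - 1 - t) * gegenbauer lam n t)
          = (\<Sum>k\<le>M + N + 1. R k n * gegenbauer lam k y)"
    and n: "n \<le> N" and k: "M < k" "k \<le> M + N + 1"
  shows "R k n = (\<Sum>i\<le>M. coeff (pcompose (\<Sum>m\<le>M. smult (a m) (gp lam m)) [:-1, 1:]) i * fact i * Ac lam (Suc i) k n)"
proof -
  define K where "K = M + N + 1"
  define F where "F = (\<Sum>m\<le>M. smult (a m) (gp lam m))"
  define Gp where "Gp = pcompose F [:-1, 1:]"
  have fF: "f x = poly F x" for x by (simp add: f_def F_def poly_sum poly_gp)
  have dF: "degree F \<le> M" unfolding F_def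
    by (intro degree_sum_le) (auto intro: order.trans[OF degree_smult_le] order.trans[OF degree_gp])
  have dG: "degree Gp \<le> M" using dF by (simp add: Gp_def degree_pcompose)
  have polyG: "poly Gp z = (\<Sum>i\<le>M. coeff Gp i * z ^ i)" for z
  proof -
    have "poly Gp z = (\<Sum>i\<le>degree Gp. coeff Gp i * z ^ i)" by (rule poly_altdef)
    also have "\<dots> = (\<Sum>i\<le>M. coeff Gp i * z ^ i)"
      using dG by (intro sum.mono_neutral_left) (auto simp: coeff_eq_0)
    finally show ?thesis .
  qed
  have fG: "f (y - 1 - t) = (\<Sum>i\<le>M. coeff Gp i * (y - t) ^ i)" for y t
  proof -
    have "f (y - 1 - t) = poly Gp (y - t)" unfolding fF Gp_def poly_pcompose by (simp add: algebra_simps)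
    then show ?thesis using polyG[of "y - t"] by simp
  qed
  have "\<forall>i. \<exists>P. (\<forall>y\<ge>-1. ((\<lambda>t. (y - t)^i * poly (gp lam n) t) has_integral poly P y) {-1..y})
       \<and> (pderiv ^^ Suc i) P = smult (fact i) (gp lam n)"
    using Phi by blast
  then obtain Pf where Pf1: "\<And>i y. y \<ge> -1 \<Longrightarrow> ((\<lambda>t. (y - t)^i * poly (gp lam n) t) has_integral poly (Pf i) y) {-1..y}"
    and Pf2: "\<And>i. (pderiv ^^ Suc i) (Pf i) = smult (fact i) (gp lam n)"
    by metis
  define H where "H = (\<Sum>i\<le>M. smult (coeff Gp i) (Pf i))"
  have intH: "integral {-1..y} (\<lambda>t. f (y - 1 - t) * gegenbauer lam n t) = poly H y" if y: "y \<in> {-1..1}" for y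
  proof -
    have "(\<lambda>t. f (y - 1 - t) * gegenbauer lam n t) = (\<lambda>t. \<Sum>i\<le>M. coeff Gp i * ((y - t) ^ i * poly (gp lam n) t))"
      by (rule ext) (simp add: fG sum_distrib_right poly_gp mult.assoc)
    moreover have "((\<lambda>t. \<Sum>i\<le>M. coeff Gp i * ((y - t) ^ i * poly (gp lam n) t)) has_integral (\<Sum>i\<le>M. coeff Gp i * poly (Pf i) y)) {-1..y}"
      using y by (intro has_integral_sum has_integral_cmult_real Pf1) auto
    ultimately show ?thesis by (simp add: H_def poly_sum integral_unique)
  qed
  have eqH: "(\<Sum>k\<le>K. smult (R k n) (gp lam k)) = H"
  proof (rule poly_agree)
    fix y :: real assume y: "y \<in> {-1..1}"
    have "poly (\<Sum>k\<le>K. smult (R k n) (gp lam k)) y = (\<Sum>k\<le>M + N + 1. R k n * gegenbauer lam k y)"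
      by (simp add: poly_sum poly_gp K_def)
    also have "\<dots> = poly H y" using R_def[OF n y] intH[OF y] by simp
    finally show "poly (\<Sum>k\<le>K. smult (R k n) (gp lam k)) y = poly H y" .
  qed
  define T where "T = (\<Sum>i\<le>M. smult (coeff Gp i * fact i) (JJ lam (Suc i) n))"
  define cT where "cT = (\<lambda>k. \<Sum>i\<le>M. coeff Gp i * fact i * Ac lam (Suc i) k n)"
  have eqT: "T = (\<Sum>k\<le>K. smult (cT k) (gp lam k))"
  proof -
    have "T = (\<Sum>i\<le>M. smult (coeff Gp i * fact i) (\<Sum>k\<le>K. smult (Ac lam (Suc i) k n) (gp lam k)))"
      unfolding T_def using n by (intro sum.cong refl) (subst JJ_sum[of n _ K], auto simp: K_def)
    also have "\<dots> = (\<Sum>i\<le>M. \<Sum>k\<le>K. smult (coeff Gp i * fact i * Ac lam (Suc i) k n) (gp lam k))"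
      by (simp add: smult_sum_right mult.assoc)
    also have "\<dots> = (\<Sum>k\<le>K. \<Sum>i\<le>M. smult (coeff Gp i * fact i * Ac lam (Suc i) k n) (gp lam k))"
      by (rule sum.swap)
    also have "\<dots> = (\<Sum>k\<le>K. smult (cT k) (gp lam k))"
      by (simp add: cT_def smult_sum)
    finally show ?thesis .
  qed
  have dHT: "degree (H - T) \<le> M"
  proof -
    have "H - T = (\<Sum>i\<le>M. smult (coeff Gp i) (Pf i - smult (fact i) (JJ lam (Suc i) n)))"
      by (simp add: H_def T_def sum_subtractf[symmetric] smult_diff_right mult.commute)
    also have "degree \<dots> \<le> M"
    proof (intro degree_sum_le)
      fix i assume i: "i \<in> {..M}"
      have "(pderiv ^^ Suc i) (smult 1 (Pf i) - smult (fact i) (JJ lam (Suc i) n)) = 0"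
        unfolding funpow_pderiv_lin Pf2 funpow_pderiv_JJ[OF lam_gt lam_ne] by simp
      then have "degree (Pf i - smult (fact i) (JJ lam (Suc i) n)) \<le> i"
        using funpow_pderiv_zero_degree by simp
      then show "degree (smult (coeff Gp i) (Pf i - smult (fact i) (JJ lam (Suc i) n))) \<le> M"
        using i by (meson atMost_iff degree_smult_le le_trans)
    qed simp
    finally show ?thesis .
  qed
  have "H - T = (\<Sum>k\<le>K. smult (R k n - cT k) (gp lam k))"
    unfolding eqH[symmetric] eqT by (simp add: sum_subtractf[symmetric] smult_diff_left)
  then have "R k n - cT k = 0"
    using tri[OF lam_gt lam_ne, of "\<lambda>k. R k n - cT k" K M k] dHT k by (simp add: K_def)
  then show ?thesis by (simp add: cT_def Gp_def F_def)
qed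

theorem theorem4p4:
  fixes lam :: real and M N :: nat and a :: "nat \<Rightarrow> real"
    and f :: "real \<Rightarrow> real" and R :: "nat \<Rightarrow> nat \<Rightarrow> real"
  assumes lam_gt: "lam > -1/2" and lam_ne: "lam \<noteq> 0"
    and f_def: "\<And>x. f x = (\<Sum>m\<le>M. a m * gegenbauer lam m x)"
    and R_def: "\<And>n y. n \<le> N \<Longrightarrow> y \<in> {-1..1} \<Longrightarrow>
        integral {-1..y} (\<lambda>t. f (y - 1 - t) * gegenbauer lam n t)
          = (\<Sum>k\<le>M + N + 1. R k n * gegenbauer lam k y)"
  shows "\<forall>k n. M + 1 \<le> k \<and> k \<le> N \<and> M + 1 \<le> n \<and> n \<le> N \<longrightarrow>
           R k n = (-1) ^ (k + n) * ((real k + lam) / (real n + lam)) * R n k"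
proof (intro allI impI)
  fix k n assume kn: "M + 1 \<le> k \<and> k \<le> N \<and> M + 1 \<le> n \<and> n \<le> N"
  define c where "c = (\<lambda>i. coeff (pcompose (\<Sum>m\<le>M. smult (a m) (gp lam m)) [:-1, 1:]) i * fact i)"
  have r1: "R k n = (\<Sum>i\<le>M. c i * Ac lam (Suc i) k n)"
    using column_formula[OF lam_gt lam_ne f_def R_def, of n k] kn by (simp add: c_def)
  have r2: "R n k = (\<Sum>i\<le>M. c i * Ac lam (Suc i) n k)"
    using column_formula[OF lam_gt lam_ne f_def R_def, of k n] kn by (simp add: c_def)
  show "R k n = (-1) ^ (k + n) * ((real k + lam) / (real n + lam)) * R n k"
    unfolding r1 r2 sum_distrib_left
    by (rule sum.cong[OF refl]) (subst Ac_sym2[OF lam_gt lam_ne], simp add: ac_simps)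
qed

end
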